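(* Let $d\ge1$ and $s\in[0,d]$. There exists $\kappa_1>0$ such that for every nonempty open bounded set $E\subset\mathbb R^d$ there exists an absolutely continuous (with respect to Lebesgue measure) Borel probability measure $\eta$ with bounded density, whose support is a finite union of pairwise disjoint $d$-dimensional cubes contained in $E$, and such that \[ \varphi^s(E)\le \kappa_1\cdot\inf_{x\in E}\inf_{r>0}\frac{r^s}{\eta(E\cap B_r(x))}. \]
   Context: $B_r(x)$ denotes the open ball in $\mathbb R^d$ of center $x$ and radius $r$. For a Borel set $E\subset\mathbb R^d$ and $s\ge 0$, the generalized singular value function is $\varphi^s(E)=\sup_\mu \inf_{x\in E}\inf_{r>0} r^s/\mu(B_r(x))$, the supremum over Borel probability measures $\mu$ with $\mu(\mathbb R^d\setminus E)=0$. *)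

theory Defs
  imports "HOL-Probability.Probability"
begin

text \<open>Generalized singular value function
  phi^s(E) = sup over Borel probability measures mu with mu(R^d - E) = 0 of
  inf_{x in E} inf_{r>0} r^s / mu(B_r(x)), valued in [0,infinity]
  (r^s / 0 = infinity).\<close>
definition gsvf :: "real \<Rightarrow> 'a::euclidean_space set \<Rightarrow> ennreal" where
  "gsvf s E = (SUP \<mu> \<in> {\<mu>. sets \<mu> = sets borel \<and> prob_space \<mu> \<and> emeasure \<mu> (UNIV - E) = 0}.
      INF x\<in>E. INF r\<in>{0<..}. ennreal (r powr s) / emeasure \<mu> (ball x r))"

definition msupport :: "'a::metric_space measure \<Rightarrow> 'a set" where
  "msupport \<mu> = {x. \<forall>r>0. emeasure \<mu> (ball x r) > 0}"

definition is_cube :: "'a::euclidean_space set \<Rightarrow> bool" where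
  "is_cube Q \<longleftrightarrow> (\<exists>a l. l > 0 \<and> Q = cbox a (a + l *\<^sub>R One))"

end

theory Submission
  imports Defs
begin



definition lo :: "real \<Rightarrow> ('a::euclidean_space \<Rightarrow> int) \<Rightarrow> 'a" where
  "lo \<delta> k = (\<Sum>b\<in>Basis. (\<delta> * of_int (k b)) *\<^sub>R b)"
definition Hc :: "real \<Rightarrow> ('a::euclidean_space \<Rightarrow> int) \<Rightarrow> 'a set" where
  "Hc \<delta> k = {y. \<forall>b\<in>Basis. \<delta> * of_int (k b) \<le> y \<bullet> b \<and> y \<bullet> b < \<delta> * (of_int (k b) + 1)}"
definition Kc :: "real \<Rightarrow> ('a::euclidean_space \<Rightarrow> int) \<Rightarrow> 'a set" where
  "Kc \<delta> k = cbox (lo \<delta> k) (lo \<delta> k + \<delta> *\<^sub>R One)"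
definition Sc :: "real \<Rightarrow> ('a::euclidean_space \<Rightarrow> int) \<Rightarrow> 'a set" where
  "Sc \<delta> k = cbox (lo \<delta> k + (\<delta>/4) *\<^sub>R One) (lo \<delta> k + (3*\<delta>/4) *\<^sub>R One)"
definition cell :: "real \<Rightarrow> 'a::euclidean_space \<Rightarrow> ('a \<Rightarrow> int)" where
  "cell \<delta> y = restrict (\<lambda>b. \<lfloor>y \<bullet> b / \<delta>\<rfloor>) Basis"

lemma lo_inner: "b \<in> Basis \<Longrightarrow> lo \<delta> k \<bullet> b = \<delta> * of_int (k b)"
  by (simp add: lo_def inner_sum_left inner_Basis if_distrib cong: if_cong)

lemma cell_in: "\<delta> > 0 \<Longrightarrow> y \<in> Hc \<delta> (cell \<delta> y)"
proof -
  assume d: "\<delta> > 0"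
  { fix b :: 'a assume "b \<in> Basis"
    have "\<delta> * of_int \<lfloor>y \<bullet> b / \<delta>\<rfloor> \<le> y \<bullet> b"
      using d floor_divide_lower[OF d, of "y \<bullet> b"] by (simp add: mult.commute)
    moreover have "y \<bullet> b < \<delta> * (of_int \<lfloor>y \<bullet> b / \<delta>\<rfloor> + 1)"
      using d floor_divide_upper[OF d, of "y \<bullet> b"] by (simp add: mult.commute)
    ultimately have "\<delta> * of_int \<lfloor>y \<bullet> b / \<delta>\<rfloor> \<le> y \<bullet> b \<and> y \<bullet> b < \<delta> * (of_int \<lfloor>y \<bullet> b / \<delta>\<rfloor> + 1)" by simp }
  then show ?thesis by (simp add: Hc_def cell_def)
qed

lemma cell_PiE: "cell \<delta> y \<in> Basis \<rightarrow>\<^sub>E UNIV"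
  by (simp add: cell_def)

lemma Hc_sub_Kc: "Hc \<delta> k \<subseteq> Kc \<delta> k"
  by (fastforce simp: Hc_def Kc_def mem_box lo_inner inner_add_left algebra_simps)

lemma Sc_sub_Kc: "\<delta> > 0 \<Longrightarrow> Sc \<delta> k \<subseteq> Kc \<delta> k"
  apply (clarsimp simp: Sc_def Kc_def mem_box lo_inner inner_add_left algebra_simps)
  apply (drule bspec, assumption) apply auto done

lemma Kc_dist: fixes y :: "'a::euclidean_space" and \<delta> :: real assumes "y \<in> Kc \<delta> k" "z \<in> Kc \<delta> k" "\<delta> > 0"
  shows "dist y z \<le> DIM('a) * \<delta>"
proof -
  have "dist y z \<le> (\<Sum>b\<in>(Basis::'a set). \<bar>(y - z) \<bullet> b\<bar>)"
    unfolding dist_norm by (rule norm_le_l1)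
  also have "\<dots> \<le> (\<Sum>b\<in>(Basis::'a set). (\<delta>::real))"
  proof (intro sum_mono)
    fix b :: 'a assume b: "b \<in> Basis"
    have "lo \<delta> k \<bullet> b \<le> y \<bullet> b \<and> y \<bullet> b \<le> (lo \<delta> k + \<delta> *\<^sub>R One) \<bullet> b"
      "lo \<delta> k \<bullet> b \<le> z \<bullet> b \<and> z \<bullet> b \<le> (lo \<delta> k + \<delta> *\<^sub>R One) \<bullet> b"
      using assms(1,2) b unfolding Kc_def mem_box by blast+
    then show "\<bar>(y - z) \<bullet> b\<bar> \<le> \<delta>" using b
      by (simp add: inner_add_left inner_diff_left abs_le_iff)
  qed
  finally show ?thesis by simp
qed

lemma PiE_neq: assumes "k \<in> Basis \<rightarrow>\<^sub>E UNIV" "k' \<in> Basis \<rightarrow>\<^sub>E UNIV" "k \<noteq> k'"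
  obtains b :: "'a::euclidean_space" where "b \<in> Basis" "k b \<noteq> k' b"
  using assms by (metis PiE_ext)

lemma Hc_disj: assumes "k \<in> Basis \<rightarrow>\<^sub>E UNIV" "k' \<in> Basis \<rightarrow>\<^sub>E UNIV" "k \<noteq> k'" "\<delta> > 0"
  shows "Hc \<delta> k \<inter> Hc \<delta> (k'::'a::euclidean_space \<Rightarrow> int) = {}"
proof -
  obtain b :: 'a where b: "b \<in> Basis" "k b \<noteq> k' b" using PiE_neq assms by blast
  then have "k b + 1 \<le> k' b \<or> k' b + 1 \<le> k b" by linarith
  then have "of_int (k b) + 1 \<le> (of_int (k' b)::real) \<or> of_int (k' b) + 1 \<le> (of_int (k b)::real)"
    by (metis of_int_1 of_int_add of_int_le_iff)
  then have "\<delta> * (of_int (k b) + 1) \<le> \<delta> * (of_int (k' b)::real) \<or> \<delta> * (of_int (k' b) + 1) \<le> \<delta> * (of_int (k b)::real)"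
    using assms(4) by (auto intro: mult_left_mono)
  then show ?thesis using b(1) by (force simp: Hc_def)
qed

lemma Sc_disj: assumes "k \<in> Basis \<rightarrow>\<^sub>E UNIV" "k' \<in> Basis \<rightarrow>\<^sub>E UNIV" "k \<noteq> k'" "\<delta> > 0"
  shows "Sc \<delta> k \<inter> Sc \<delta> (k'::'a::euclidean_space \<Rightarrow> int) = {}"
proof -
  obtain b :: 'a where b: "b \<in> Basis" "k b \<noteq> k' b" using PiE_neq assms by blast
  then have "k b + 1 \<le> k' b \<or> k' b + 1 \<le> k b" by linarith
  then have "of_int (k b) + 1 \<le> (of_int (k' b)::real) \<or> of_int (k' b) + 1 \<le> (of_int (k b)::real)"
    by (metis of_int_1 of_int_add of_int_le_iff)
  then have "\<delta> * (of_int (k b) + 1) \<le> \<delta> * (of_int (k' b)::real) \<or> \<delta> * (of_int (k' b) + 1) \<le> \<delta> * (of_int (k b)::real)"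
    using assms(4) by (auto intro: mult_left_mono)
  then show ?thesis using b(1) assms(4)
    by (fastforce simp: Sc_def mem_box lo_inner inner_add_left algebra_simps)
qed

lemma Hc_borel: "Hc \<delta> k \<in> sets borel"
  unfolding Hc_def by measurable

lemma Sc_lborel: fixes k :: "'a::euclidean_space \<Rightarrow> int" shows "\<delta> > 0 \<Longrightarrow> emeasure lborel (Sc \<delta> k) = ennreal ((\<delta>/2) ^ DIM('a))"
  by (simp add: Sc_def emeasure_lborel_cbox_eq inner_add_left algebra_simps prod_constant)

lemma Sc_is_cube: "\<delta> > 0 \<Longrightarrow> is_cube (Sc \<delta> k)"
  unfolding is_cube_def Sc_def
proof (rule exI[of _ "lo \<delta> k + (\<delta>/4) *\<^sub>R One"], rule exI[of _ "\<delta>/2"])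
  assume "\<delta> > 0"
  have "lo \<delta> k + (\<delta>/4) *\<^sub>R One + (\<delta>/2) *\<^sub>R One = lo \<delta> k + (\<delta>/4 + \<delta>/2) *\<^sub>R (One::'a)"
    by (simp only: add.assoc scaleR_add_left[symmetric])
  also have "\<delta>/4 + \<delta>/2 = 3*\<delta>/4" by simp
  finally have eq: "lo \<delta> k + (\<delta>/4) *\<^sub>R One + (\<delta>/2) *\<^sub>R One = lo \<delta> k + (3*\<delta>/4) *\<^sub>R (One::'a)" .
  show "\<delta>/2 > 0 \<and> cbox (lo \<delta> k + (\<delta>/4) *\<^sub>R One) (lo \<delta> k + (3*\<delta>/4) *\<^sub>R One) = cbox (lo \<delta> k + (\<delta>/4) *\<^sub>R One) (lo \<delta> k + (\<delta>/4) *\<^sub>R One + (\<delta>/2) *\<^sub>R One)"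
    unfolding eq using \<open>\<delta> > 0\<close> by simp
qed




lemma half_lt_one: "ennreal (1/2) < 1"
  by (metis ennreal_1 ennreal_lessI half_gt_zero_iff less_numeral_extra(1) field_sum_of_halves less_add_same_cancel1)

lemma E_full:
  fixes E :: "'a::euclidean_space set"
  assumes "sets \<mu> = sets borel" "prob_space \<mu>" "emeasure \<mu> (UNIV - E) = 0" "open E"
  shows "emeasure \<mu> E = 1"
proof -
  have sp: "space \<mu> = UNIV" using sets_eq_imp_space_eq[OF assms(1)] by simp
  have Em: "E \<in> sets \<mu>" using assms(1,4) by simp
  have Cm: "UNIV - E \<in> sets \<mu>" using assms(1,4) by simp
  have "emeasure \<mu> (space \<mu>) \<le> emeasure \<mu> E + emeasure \<mu> (UNIV - E)"
    using emeasure_subadditive[OF Em Cm] sp by (simp add: Un_absorb)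
  then have "1 \<le> emeasure \<mu> E" using assms(3) prob_space.emeasure_space_1[OF assms(2)] by simp
  moreover have "emeasure \<mu> E \<le> 1"
    using prob_space.emeasure_le_1[OF assms(2)] by blast
  ultimately show ?thesis by simp
qed

lemma cell_bound:
  fixes y :: "'a::euclidean_space"
  assumes "norm y \<le> R" "\<delta> > 0" "R > 0"
  shows "cell \<delta> y \<in> Basis \<rightarrow>\<^sub>E {- (\<lceil>R/\<delta>\<rceil> + 1) .. \<lceil>R/\<delta>\<rceil> + 1}"
proof -
  { fix b :: 'a assume b: "b \<in> Basis"
    have yb: "\<bar>y \<bullet> b\<bar> \<le> R" using Basis_le_norm[OF b, of y] assms(1) by linarith
    have "y \<bullet> b / \<delta> \<le> R / \<delta>" using yb assms(2) by (simp add: divide_right_mono)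
    then have u: "\<lfloor>y \<bullet> b / \<delta>\<rfloor> \<le> \<lceil>R/\<delta>\<rceil>"
      by (meson floor_le_ceiling floor_mono order_trans)
    have "- (R / \<delta>) \<le> y \<bullet> b / \<delta>" using divide_right_mono[of "-R" "y \<bullet> b" \<delta>] yb assms(2) by simp
    then have "\<lfloor>- (R / \<delta>)\<rfloor> \<le> \<lfloor>y \<bullet> b / \<delta>\<rfloor>" by (rule floor_mono)
    then have l: "- \<lceil>R/\<delta>\<rceil> \<le> \<lfloor>y \<bullet> b / \<delta>\<rfloor>" by (simp add: floor_minus)
    have "\<lfloor>y \<bullet> b / \<delta>\<rfloor> \<in> {- (\<lceil>R/\<delta>\<rceil> + 1) .. \<lceil>R/\<delta>\<rceil> + 1}" using u l by simp }
  then show ?thesis by (auto simp: cell_def)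
qed

lemma exhaust:
  fixes E :: "'a::euclidean_space set"
  assumes mu: "sets \<mu> = sets borel" "prob_space \<mu>" "emeasure \<mu> (UNIV - E) = 0"
    and E: "open E" "bounded E"
  shows "\<exists>\<delta>>0. \<exists>I. finite I \<and> I \<subseteq> Basis \<rightarrow>\<^sub>E UNIV \<and> (\<forall>k\<in>I. Kc \<delta> k \<subseteq> E) \<and>
           emeasure \<mu> (\<Union>k\<in>I. Hc \<delta> k) > ennreal (1/2)"
proof -
  obtain R where R: "R > 0" "\<forall>x\<in>E. norm x \<le> R" using E(2) bounded_pos by blast
  define N where "N \<delta> = \<lceil>R/\<delta>\<rceil> + 1" for \<delta>
  define I where "I \<delta> = {k \<in> Basis \<rightarrow>\<^sub>E {- N \<delta> .. N \<delta>}. Kc \<delta> k \<subseteq> E}" for \<delta>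
  define A where "A \<delta> = (\<Union>k\<in>I \<delta>. Hc \<delta> k)" for \<delta>
  have finI: "finite (I \<delta>)" for \<delta>
  proof (rule finite_subset)
    show "I \<delta> \<subseteq> Basis \<rightarrow>\<^sub>E {- N \<delta> .. N \<delta>}" unfolding I_def by blast
    show "finite (Basis \<rightarrow>\<^sub>E {- N \<delta> .. N \<delta>})" by (intro finite_PiE) auto
  qed
  have Am: "A \<delta> \<in> sets \<mu>" for \<delta>
    unfolding A_def mu(1) using finI by (auto intro!: sets.finite_UN Hc_borel)
  define B where "B m = (\<Inter>n\<in>{m..}. A (1 / (real n + 1)))" for m
  have Bm: "B m \<in> sets \<mu>" for m
    unfolding B_def by (intro sets.countable_INT') (auto simp: Am)
  have incB: "incseq B" unfolding incseq_def B_def by auto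
  have EB: "E \<subseteq> (\<Union>m. B m)"
  proof
    fix y assume y: "y \<in> E"
    then obtain \<epsilon> where \<epsilon>: "\<epsilon> > 0" "ball y \<epsilon> \<subseteq> E" using E(1) open_contains_ball by blast
    obtain m :: nat where m: "real DIM('a) / \<epsilon> < real m" using reals_Archimedean2 by blast
    have "y \<in> B m" unfolding B_def
    proof
      fix n assume "n \<in> {m..}"
      then have nm: "m \<le> n" by simp
      define \<delta> where "\<delta> = 1 / (real n + 1)"
      have d0: "\<delta> > 0" unfolding \<delta>_def by simp
      have "real DIM('a) / \<epsilon> < real n + 1" using m nm by linarith
      then have dd: "real DIM('a) * \<delta> < \<epsilon>" unfolding \<delta>_def using \<epsilon>(1)
        by (simp add: field_simps)
      have yH: "y \<in> Hc \<delta> (cell \<delta> y)" using cell_in[OF d0] .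
      have "Kc \<delta> (cell \<delta> y) \<subseteq> E"
      proof
        fix z assume z: "z \<in> Kc \<delta> (cell \<delta> y)"
        have "dist y z \<le> real DIM('a) * \<delta>"
          using Kc_dist[OF _ z d0] yH Hc_sub_Kc by blast
        then have "z \<in> ball y \<epsilon>" using dd by simp
        then show "z \<in> E" using \<epsilon>(2) by blast
      qed
      moreover have "cell \<delta> y \<in> Basis \<rightarrow>\<^sub>E {- N \<delta> .. N \<delta>}"
        unfolding N_def using cell_bound[OF _ d0 R(1)] R(2) y by blast
      ultimately have "cell \<delta> y \<in> I \<delta>" unfolding I_def by blast
      then show "y \<in> A (1 / (real n + 1))" unfolding A_def \<delta>_def[symmetric] using yH by blast
    qed
    then show "y \<in> (\<Union>m. B m)" by blast
  qed
  have "(SUP m. emeasure \<mu> (B m)) = emeasure \<mu> (\<Union>m. B m)"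
    by (rule SUP_emeasure_incseq) (use Bm incB in auto)
  also have "\<dots> \<ge> emeasure \<mu> E"
    by (rule emeasure_mono[OF EB]) (use Bm in auto)
  finally have "ennreal (1/2) < (SUP m. emeasure \<mu> (B m))"
    using E_full[OF mu E(1)] half_lt_one by (metis order_less_le_trans)
  then obtain m where m: "ennreal (1/2) < emeasure \<mu> (B m)" by (auto simp: less_SUP_iff)
  have "B m \<subseteq> A (1 / (real m + 1))" unfolding B_def by auto
  then have "emeasure \<mu> (B m) \<le> emeasure \<mu> (A (1 / (real m + 1)))"
    by (rule emeasure_mono) (rule Am)
  with m have "ennreal (1/2) < emeasure \<mu> (A (1 / (real m + 1)))" by simp
  moreover have "I \<delta> \<subseteq> Basis \<rightarrow>\<^sub>E UNIV" for \<delta> unfolding I_def by auto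
  moreover have "\<forall>k\<in>I \<delta>. Kc \<delta> k \<subseteq> E" for \<delta> unfolding I_def by auto
  ultimately show ?thesis unfolding A_def
    by (intro exI[of _ "1 / (real m + 1)"] conjI exI[of _ "I (1 / (real m + 1))"]) (auto simp: finI)
qed




lemma real_key:
  fixes s \<delta> r Z e p :: real and n :: nat
  assumes s: "0 \<le> s" "s \<le> real n" and d0: "\<delta> > 0" and r: "r > 0" and Z: "Z > 0"
    and p: "p \<ge> 0" and e: "e \<ge> 0"
    and ea: "e \<le> p / Z" and eb: "e \<le> p / (Z * (\<delta>/2)^n) * (2*r)^n"
  shows "Z / (4^n * (1 + real n) powr s) * (r + real n * \<delta>) powr s * e \<le> r powr s * p"
proof -
  define c0 where "c0 = 4^n * (1 + real n) powr s"
  have c0: "c0 > 0" unfolding c0_def by simp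
  have rs: "r powr s > 0" using r by simp
  show ?thesis
  proof (cases "\<delta> \<le> r")
    case True
    have le1: "r + real n * \<delta> \<le> (1 + real n) * r" using True by (simp add: algebra_simps mult_right_mono)
    have "(r + real n * \<delta>) powr s \<le> ((1 + real n) * r) powr s"
      using r d0 by (intro powr_mono2[OF s(1) _ le1]) simp
    also have "\<dots> = (1 + real n) powr s * r powr s" using r by (simp add: powr_mult)
    finally have A: "(r + real n * \<delta>) powr s \<le> (1 + real n) powr s * r powr s" .
    have "Z / c0 * (r + real n * \<delta>) powr s * e \<le> Z / c0 * ((1 + real n) powr s * r powr s) * (p / Z)"
      by (intro mult_mono A ea mult_left_mono) (use Z c0 e in auto)
    also have "\<dots> = r powr s * p / 4^n" unfolding c0_def using Z by simp
    also have "\<dots> \<le> r powr s * p" using divide_left_mono[of 1 "4^n" "r powr s * p"] rs p by simp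
    finally show ?thesis unfolding c0_def .
  next
    case False
    then have rd: "r < \<delta>" by simp
    define t where "t = r / \<delta>"
    have t: "0 < t" "t \<le> 1" unfolding t_def using r d0 rd by auto
    have le1: "r + real n * \<delta> \<le> (1 + real n) * \<delta>" using rd by (simp add: algebra_simps)
    have "(r + real n * \<delta>) powr s \<le> ((1 + real n) * \<delta>) powr s"
      using r d0 by (intro powr_mono2[OF s(1) _ le1]) simp
    also have "\<dots> = (1 + real n) powr s * \<delta> powr s" using d0 by (simp add: powr_mult)
    finally have A: "(r + real n * \<delta>) powr s \<le> (1 + real n) powr s * \<delta> powr s" .
    have "2*r = 4*t*(\<delta>/2)" unfolding t_def using d0 by simp
    then have "(2*r)^n = (4*t*(\<delta>/2))^n" by (simp only:)
    also have "\<dots> = 4^n * t^n * (\<delta>/2)^n" by (simp only: power_mult_distrib)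
    finally have "(2*r)^n = 4^n * t^n * (\<delta>/2)^n" .
    then have "p / (Z * (\<delta>/2)^n) * (2*r)^n = p * 4^n * t^n / Z" using Z d0 by simp
    then have B: "e \<le> p * 4^n * t^n / Z" using eb by simp
    have "Z / c0 * (r + real n * \<delta>) powr s * e \<le> Z / c0 * ((1 + real n) powr s * \<delta> powr s) * (p * 4^n * t^n / Z)"
      by (intro mult_mono A B mult_left_mono) (use Z c0 e p t in auto)
    also have "\<dots> = \<delta> powr s * t^n * p" unfolding c0_def using Z by simp
    also have "t^n = t powr real n" using t by (simp add: powr_realpow)
    finally have C: "Z / c0 * (r + real n * \<delta>) powr s * e \<le> \<delta> powr s * t powr real n * p" .
    have "t powr real n \<le> t powr s" by (rule powr_mono'[OF s(2)]) (use t in auto)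
    then have D: "\<delta> powr s * t powr real n * p \<le> \<delta> powr s * t powr s * p"
      using p by (simp add: mult_left_mono mult_right_mono)
    have E: "\<delta> powr s * t powr s = r powr s" unfolding t_def using d0 r
      by (simp add: powr_divide)
    have "Z / c0 * (r + real n * \<delta>) powr s * e \<le> r powr s * p" using C D E by simp
    then show ?thesis unfolding c0_def by simp
  qed
qed




context
  fixes \<mu> :: "'a::euclidean_space measure" and \<delta> :: real and I :: "('a \<Rightarrow> int) set"
  assumes mu: "sets \<mu> = sets borel" "prob_space \<mu>"
    and d0: "\<delta> > 0" and finI: "finite I" and IPi: "I \<subseteq> Basis \<rightarrow>\<^sub>E UNIV"
    and Zbig: "emeasure \<mu> (\<Union>k\<in>I. Hc \<delta> k) > ennreal (1/2)"
begin

definition "mm k = measure \<mu> (Hc \<delta> k)"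
definition "I0 = {k\<in>I. mm k > 0}"
definition "ZZ = (\<Sum>k\<in>I0. mm k)"
definition "vv = (\<delta>/2)^DIM('a)"
definition "cc k = mm k / (ZZ * vv)"
definition "ff y = (\<Sum>k\<in>I0. cc k * indicator (Sc \<delta> k) y)"

lemma Hc_mu[measurable]: "Hc \<delta> k \<in> sets \<mu>"
  using Hc_borel mu(1) by simp

lemma mm_nonneg: "mm k \<ge> 0" unfolding mm_def by simp

lemma finI0: "finite I0" unfolding I0_def using finI by simp

lemma I0_sub: "I0 \<subseteq> I" unfolding I0_def by auto

lemma sum_mm_I: "(\<Sum>k\<in>I. mm k) = ZZ"
  unfolding ZZ_def
  by (rule sum.mono_neutral_right[OF finI I0_sub]) (use mm_nonneg in \<open>force simp: I0_def less_le\<close>)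

lemma measure_Union_Hc:
  assumes "J \<subseteq> I"
  shows "measure \<mu> (\<Union>k\<in>J. Hc \<delta> k) = (\<Sum>k\<in>J. mm k)"
  unfolding mm_def
proof (rule measure_finite_Union)
  show "finite J" using finite_subset[OF assms finI] .
  show "(\<lambda>k. Hc \<delta> k) ` J \<subseteq> sets \<mu>" by auto
  show "disjoint_family_on (\<lambda>k. Hc \<delta> k) J"
    unfolding disjoint_family_on_def using Hc_disj[OF _ _ _ d0] IPi assms by blast
  show "\<And>i. i \<in> J \<Longrightarrow> emeasure \<mu> (Hc \<delta> i) \<noteq> \<infinity>"
    using finite_measure.emeasure_finite[OF prob_space.axioms(1)[OF mu(2)]] by simp
qed

lemma ZZ_big: "ZZ > 1/2"
proof -
  have "emeasure \<mu> (\<Union>k\<in>I. Hc \<delta> k) = ennreal (measure \<mu> (\<Union>k\<in>I. Hc \<delta> k))"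
    using finite_measure.emeasure_eq_measure[OF prob_space.axioms(1)[OF mu(2)]] .
  then have "ennreal (1/2) < ennreal (measure \<mu> (\<Union>k\<in>I. Hc \<delta> k))" using Zbig by simp
  then have "1/2 < measure \<mu> (\<Union>k\<in>I. Hc \<delta> k)" by (rule ennreal_less_iff[THEN iffD1, rotated]) simp
  then show ?thesis using measure_Union_Hc[of I] sum_mm_I by simp
qed

lemma ZZ_pos: "ZZ > 0" using ZZ_big by simp

lemma vv_pos: "vv > 0" unfolding vv_def using d0 by simp

lemma cc_nonneg: "cc k \<ge> 0" unfolding cc_def using mm_nonneg ZZ_pos vv_pos by simp

lemma cc_pos: "k \<in> I0 \<Longrightarrow> cc k > 0" unfolding cc_def I0_def using ZZ_pos vv_pos by simp

lemma ff_nonneg: "ff y \<ge> 0" unfolding ff_def using cc_nonneg by (simp add: sum_nonneg)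

lemma ff_meas: "ff \<in> borel_measurable lborel"
  unfolding ff_def Sc_def by measurable

lemma ff_bounded: "bounded (range ff)"
proof -
  have "\<forall>x\<in>range ff. norm x \<le> (\<Sum>k\<in>I0. cc k)"
  proof
    fix x assume "x \<in> range ff"
    then obtain y where x: "x = ff y" by blast
    have "ff y \<le> (\<Sum>k\<in>I0. cc k)" unfolding ff_def
      by (rule sum_mono) (use cc_nonneg in \<open>auto simp: indicator_def\<close>)
    then show "norm x \<le> (\<Sum>k\<in>I0. cc k)" using x ff_nonneg by simp
  qed
  then show ?thesis unfolding bounded_iff by blast
qed

lemma Sc_fin: "emeasure lborel (Sc \<delta> k \<inter> A) \<noteq> top"
proof -
  have "emeasure lborel (Sc \<delta> k \<inter> A) \<le> emeasure lborel (Sc \<delta> k)"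
    by (rule emeasure_mono) (auto simp: Sc_def)
  then show ?thesis using Sc_lborel[OF d0, of k] by (auto simp: top_unique)
qed

lemma eta_emeasure:
  assumes A: "A \<in> sets borel"
  shows "emeasure (density lborel (\<lambda>x. ennreal (ff x))) A
     = ennreal (\<Sum>k\<in>I0. cc k * measure lborel (Sc \<delta> k \<inter> A))"
proof -
  have "emeasure (density lborel (\<lambda>x. ennreal (ff x))) A = (\<integral>\<^sup>+ x. ennreal (ff x) * indicator A x \<partial>lborel)"
    by (rule emeasure_density) (use ff_meas A in auto)
  also have "\<dots> = (\<integral>\<^sup>+ x. (\<Sum>k\<in>I0. ennreal (cc k) * indicator (Sc \<delta> k \<inter> A) x) \<partial>lborel)"
  proof (rule nn_integral_cong)
    fix x
    have "ennreal (ff x) * indicator A x = ennreal (ff x * indicator A x)"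
      by (simp add: indicator_def)
    also have "ff x * indicator A x = (\<Sum>k\<in>I0. cc k * indicator (Sc \<delta> k \<inter> A) x)"
      unfolding ff_def sum_distrib_right by (rule sum.cong) (auto simp: indicator_def)
    also have "ennreal \<dots> = (\<Sum>k\<in>I0. ennreal (cc k * indicator (Sc \<delta> k \<inter> A) x))"
      by (rule sum_ennreal[symmetric]) (use cc_nonneg in auto)
    also have "\<dots> = (\<Sum>k\<in>I0. ennreal (cc k) * indicator (Sc \<delta> k \<inter> A) x)"
      by (rule sum.cong) (auto simp: indicator_def)
    finally show "ennreal (ff x) * indicator A x = (\<Sum>k\<in>I0. ennreal (cc k) * indicator (Sc \<delta> k \<inter> A) x)" .
  qed
  also have "\<dots> = (\<Sum>k\<in>I0. \<integral>\<^sup>+ x. ennreal (cc k) * indicator (Sc \<delta> k \<inter> A) x \<partial>lborel)"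
    by (rule nn_integral_sum) (use A in \<open>auto simp: Sc_def\<close>)
  also have "\<dots> = (\<Sum>k\<in>I0. ennreal (cc k) * emeasure lborel (Sc \<delta> k \<inter> A))"
    by (rule sum.cong[OF refl], rule nn_integral_cmult_indicator) (use A in \<open>auto simp: Sc_def\<close>)
  also have "\<dots> = (\<Sum>k\<in>I0. ennreal (cc k * measure lborel (Sc \<delta> k \<inter> A)))"
    by (rule sum.cong[OF refl]) (simp add: emeasure_eq_ennreal_measure[OF Sc_fin] ennreal_mult cc_nonneg)
  also have "\<dots> = ennreal (\<Sum>k\<in>I0. cc k * measure lborel (Sc \<delta> k \<inter> A))"
    by (rule sum_ennreal) (simp add: cc_nonneg)
  finally show ?thesis .
qed


abbreviation "eta \<equiv> density lborel (\<lambda>x. ennreal (ff x))"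

lemma Sc_measure: fixes k :: "'a \<Rightarrow> int" shows "measure lborel (Sc \<delta> k) = vv"
  using Sc_lborel[OF d0, of k] vv_pos unfolding vv_def measure_def by simp

lemma eta_prob: "prob_space eta"
proof
  have "emeasure eta (space eta) = emeasure eta UNIV" by simp
  also have "\<dots> = ennreal (\<Sum>k\<in>I0. cc k * measure lborel (Sc \<delta> k \<inter> UNIV))"
    by (rule eta_emeasure) simp
  also have "(\<Sum>k\<in>I0. cc k * measure lborel (Sc \<delta> k \<inter> UNIV)) = (\<Sum>k\<in>I0. mm k / ZZ)"
    by (rule sum.cong[OF refl]) (use vv_pos in \<open>simp add: Sc_measure cc_def\<close>)
  also have "\<dots> = 1" using ZZ_pos by (simp add: sum_divide_distrib[symmetric] ZZ_def)
  finally show "emeasure eta (space eta) = 1" by simp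
qed

lemma Sc_ball_pos:
  fixes k :: "'a \<Rightarrow> int"
  assumes "x \<in> Sc \<delta> k" "r > 0"
  shows "measure lborel (Sc \<delta> k \<inter> ball x r) > 0"
proof -
  define a :: 'a where "a = lo \<delta> k + (\<delta>/4) *\<^sub>R One"
  define b :: 'a where "b = lo \<delta> k + (3*\<delta>/4) *\<^sub>R One"
  have Sab: "Sc \<delta> k = cbox a b" unfolding Sc_def a_def b_def ..
  have ne: "box a b \<noteq> {}" unfolding box_ne_empty a_def b_def using d0
    by (simp add: inner_add_left algebra_simps)
  have "ball x r \<inter> closure (box a b) \<noteq> {}" using assms ne Sab by (simp add: closure_box) (metis centre_in_ball disjoint_iff)
  then have "ball x r \<inter> box a b \<noteq> {}" using open_Int_closure_eq_empty[of "ball x r" "box a b"] by simp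
  then obtain y where y: "y \<in> ball x r \<inter> box a b" by blast
  have "open (ball x r \<inter> box a b)" by auto
  then obtain e where e: "e > 0" "ball y e \<subseteq> ball x r \<inter> box a b" using y open_contains_ball by blast
  then have sub: "ball y e \<subseteq> Sc \<delta> k \<inter> ball x r" using Sab box_subset_cbox by blast
  have "0 < measure lborel (ball y e)" using content_ball_pos[OF e(1)] .
  also have "measure lborel (ball y e) \<le> measure lborel (Sc \<delta> k \<inter> ball x r)"
  proof (rule measure_mono_fmeasurable[OF sub])
    show "ball y e \<in> sets lborel" by simp
    have "emeasure lborel (cbox a b \<inter> ball x r) \<le> emeasure lborel (cbox a b)"
      by (rule emeasure_mono) auto
    then have "emeasure lborel (cbox a b \<inter> ball x r) < \<infinity>"
      using emeasure_lborel_cbox_finite[of a b] by (rule le_less_trans)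
    then show "Sc \<delta> k \<inter> ball x r \<in> fmeasurable lborel" unfolding Sab fmeasurable_def by auto
  qed
  finally show ?thesis .
qed

lemma eta_support: "msupport eta = \<Union>(Sc \<delta> ` I0)"
proof
  show "\<Union>(Sc \<delta> ` I0) \<subseteq> msupport eta"
  proof
    fix x assume "x \<in> \<Union>(Sc \<delta> ` I0)"
    then obtain k where k: "k \<in> I0" "x \<in> Sc \<delta> k" by blast
    show "x \<in> msupport eta" unfolding msupport_def
    proof (intro CollectI allI impI)
      fix r :: real assume r: "r > 0"
      have "0 < cc k * measure lborel (Sc \<delta> k \<inter> ball x r)"
        using cc_pos[OF k(1)] Sc_ball_pos[OF k(2) r] by simp
      also have "\<dots> \<le> (\<Sum>k\<in>I0. cc k * measure lborel (Sc \<delta> k \<inter> ball x r))"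
        by (rule member_le_sum[OF k(1)]) (auto simp: cc_nonneg finI0)
      finally show "0 < emeasure eta (ball x r)"
        by (subst eta_emeasure) auto
    qed
  qed
  show "msupport eta \<subseteq> \<Union>(Sc \<delta> ` I0)"
  proof
    fix x assume x: "x \<in> msupport eta"
    show "x \<in> \<Union>(Sc \<delta> ` I0)"
    proof (rule ccontr)
      assume nx: "x \<notin> \<Union>(Sc \<delta> ` I0)"
      have "closed (\<Union>(Sc \<delta> ` I0))" using finI0 by (auto simp: Sc_def intro!: closed_Union)
      then have op: "open (- \<Union>(Sc \<delta> ` I0))" by (simp only: open_Compl)
      have "x \<in> - \<Union>(Sc \<delta> ` I0)" using nx by blast
      then obtain r where r: "r > 0" "ball x r \<subseteq> - \<Union>(Sc \<delta> ` I0)"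
        using op open_contains_ball by blast
      have "(\<Sum>k\<in>I0. cc k * measure lborel (Sc \<delta> k \<inter> ball x r)) = 0"
      proof (rule sum.neutral, intro ballI)
        fix k assume "k \<in> I0"
        then have "Sc \<delta> k \<inter> ball x r = {}" using r(2) by blast
        then show "cc k * measure lborel (Sc \<delta> k \<inter> ball x r) = 0" by simp
      qed
      then have "emeasure eta (ball x r) = 0" by (subst eta_emeasure) auto
      with x r(1) show False unfolding msupport_def by auto
    qed
  qed
qed


lemma ball_fm: "ball (x::'a) r \<in> fmeasurable lborel"
  using emeasure_lborel_ball_finite[of x r] by (auto simp: fmeasurable_def)

lemma measure_ball_le: "r > 0 \<Longrightarrow> measure lborel (ball (x::'a) r) \<le> (2*r)^DIM('a)"
proof -
  assume r: "r > 0"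
  have sub: "ball x r \<subseteq> cbox (x - r *\<^sub>R One) (x + r *\<^sub>R One)"
  proof
    fix y assume "y \<in> ball x r"
    then have "norm (y - x) < r" by (simp add: dist_norm norm_minus_commute)
    then have "\<bar>(y - x) \<bullet> i\<bar> < r" if "i \<in> Basis" for i
      using Basis_le_norm[OF that, of "y - x"] by linarith
    then show "y \<in> cbox (x - r *\<^sub>R One) (x + r *\<^sub>R One)"
      by (fastforce simp: mem_box inner_diff_left inner_add_left abs_less_iff)
  qed
  have "measure lborel (ball x r) \<le> measure lborel (cbox (x - r *\<^sub>R One) (x + r *\<^sub>R One))"
    by (rule measure_mono_fmeasurable[OF sub]) auto
  also have "\<dots> = (2*r)^DIM('a)"
    using r by (simp add: content_cbox_cases inner_diff_left inner_add_left prod_constant)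
  finally show ?thesis .
qed

lemma eta_est:
  assumes r: "r > 0"
  shows "(\<Sum>k\<in>I0. cc k * measure lborel (Sc \<delta> k \<inter> ball x r)) \<le> measure \<mu> (ball x (r + real DIM('a) * \<delta>)) / ZZ"
    and "(\<Sum>k\<in>I0. cc k * measure lborel (Sc \<delta> k \<inter> ball x r))
          \<le> measure \<mu> (ball x (r + real DIM('a) * \<delta>)) / (ZZ * vv) * (2*r)^DIM('a)"
proof -
  define \<rho> where "\<rho> = r + real DIM('a) * \<delta>"
  define M where "M = measure \<mu> (ball x \<rho>)"
  define J where "J = {k\<in>I0. Sc \<delta> k \<inter> ball x r \<noteq> {}}"
  have JI0: "J \<subseteq> I0" unfolding J_def by auto
  have finJ: "finite J" using finite_subset[OF JI0 finI0] .
  have JI: "J \<subseteq> I" using JI0 I0_sub by auto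
  have eJ: "(\<Sum>k\<in>I0. cc k * measure lborel (Sc \<delta> k \<inter> ball x r)) = (\<Sum>k\<in>J. cc k * measure lborel (Sc \<delta> k \<inter> ball x r))"
    by (rule sum.mono_neutral_right[OF finI0 JI0]) (auto simp: J_def)
  have HJ: "Hc \<delta> k \<subseteq> ball x \<rho>" if k: "k \<in> J" for k
  proof
    fix z assume z: "z \<in> Hc \<delta> k"
    obtain y where y: "y \<in> Sc \<delta> k" "y \<in> ball x r" using k unfolding J_def by blast
    have "dist y z \<le> real DIM('a) * \<delta>"
      by (rule Kc_dist) (use y z Sc_sub_Kc[OF d0] Hc_sub_Kc d0 in blast)+
    moreover have "dist x y < r" using y by simp
    ultimately have "dist x z < \<rho>" unfolding \<rho>_def using dist_triangle[of x z y] by linarith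
    then show "z \<in> ball x \<rho>" by simp
  qed
  have fm: "finite_measure \<mu>" using prob_space.axioms(1)[OF mu(2)] .
  have sumJ: "(\<Sum>k\<in>J. mm k) \<le> M"
  proof -
    have "(\<Sum>k\<in>J. mm k) = measure \<mu> (\<Union>k\<in>J. Hc \<delta> k)" using measure_Union_Hc[OF JI] by simp
    also have "\<dots> \<le> M" unfolding M_def
      by (rule finite_measure.finite_measure_mono[OF fm]) (use HJ mu(1) in auto)
    finally show ?thesis .
  qed
  have lamS: "measure lborel (Sc \<delta> k \<inter> ball x r) \<le> vv" for k
  proof -
    have "measure lborel (Sc \<delta> k \<inter> ball x r) \<le> measure lborel (Sc \<delta> k)"
      by (rule measure_mono_fmeasurable) (auto simp: Sc_def)
    then show ?thesis using Sc_measure by simp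
  qed
  have "(\<Sum>k\<in>J. cc k * measure lborel (Sc \<delta> k \<inter> ball x r)) \<le> (\<Sum>k\<in>J. cc k * vv)"
    by (rule sum_mono) (use lamS cc_nonneg in \<open>auto intro: mult_left_mono\<close>)
  also have "\<dots> = (\<Sum>k\<in>J. mm k) / ZZ"
    unfolding sum_divide_distrib by (rule sum.cong[OF refl]) (use vv_pos in \<open>simp add: cc_def\<close>)
  also have "\<dots> \<le> M / ZZ" using sumJ ZZ_pos by (simp add: divide_right_mono)
  finally show "(\<Sum>k\<in>I0. cc k * measure lborel (Sc \<delta> k \<inter> ball x r)) \<le> measure \<mu> (ball x (r + real DIM('a) * \<delta>)) / ZZ"
    using eJ unfolding M_def \<rho>_def by simp
  have ccJ: "cc k \<le> M / (ZZ * vv)" if "k \<in> J" for k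
  proof -
    have "mm k \<le> (\<Sum>k\<in>J. mm k)" by (rule member_le_sum[OF that]) (auto simp: mm_nonneg finJ)
    then have "mm k \<le> M" using sumJ by linarith
    then show ?thesis unfolding cc_def using ZZ_pos vv_pos by (simp add: divide_right_mono)
  qed
  have "(\<Sum>k\<in>J. cc k * measure lborel (Sc \<delta> k \<inter> ball x r)) \<le> (\<Sum>k\<in>J. M / (ZZ * vv) * measure lborel (Sc \<delta> k \<inter> ball x r))"
    by (rule sum_mono, rule mult_right_mono) (use ccJ in auto)
  also have "\<dots> = M / (ZZ * vv) * (\<Sum>k\<in>J. measure lborel (Sc \<delta> k \<inter> ball x r))"
    by (simp add: sum_distrib_left)
  finally have st1: "(\<Sum>k\<in>J. cc k * measure lborel (Sc \<delta> k \<inter> ball x r)) \<le> M / (ZZ * vv) * (\<Sum>k\<in>J. measure lborel (Sc \<delta> k \<inter> ball x r))" .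
  have "(\<Sum>k\<in>J. measure lborel (Sc \<delta> k \<inter> ball x r)) = measure lborel (\<Union>k\<in>J. Sc \<delta> k \<inter> ball x r)"
  proof (rule measure_finite_Union[symmetric])
    show "finite J" by (rule finJ)
    show "(\<lambda>k. Sc \<delta> k \<inter> ball x r) ` J \<subseteq> sets lborel" by (auto simp: Sc_def)
    show "disjoint_family_on (\<lambda>k. Sc \<delta> k \<inter> ball x r) J"
      unfolding disjoint_family_on_def using Sc_disj[OF _ _ _ d0] IPi JI by blast
    show "\<And>i. i \<in> J \<Longrightarrow> emeasure lborel (Sc \<delta> i \<inter> ball x r) \<noteq> \<infinity>"
      using Sc_fin by simp
  qed
  also have "measure lborel (\<Union>k\<in>J. Sc \<delta> k \<inter> ball x r) \<le> measure lborel (ball x r)"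
    by (rule measure_mono_fmeasurable) (use finJ in \<open>auto simp: Sc_def ball_fm intro!: sets.finite_UN\<close>)
  also have "\<dots> \<le> (2*r)^DIM('a)" by (rule measure_ball_le[OF r])
  finally have st2: "(\<Sum>k\<in>J. measure lborel (Sc \<delta> k \<inter> ball x r)) \<le> (2*r)^DIM('a)" .
  have M0: "M / (ZZ * vv) \<ge> 0" unfolding M_def using ZZ_pos vv_pos by simp
  from st1 mult_left_mono[OF st2 M0]
  show "(\<Sum>k\<in>I0. cc k * measure lborel (Sc \<delta> k \<inter> ball x r))
          \<le> measure \<mu> (ball x (r + real DIM('a) * \<delta>)) / (ZZ * vv) * (2*r)^DIM('a)"
    using eJ unfolding M_def \<rho>_def by linarith
qed


lemma e_nonneg: "(\<Sum>k\<in>I0. cc k * measure lborel (Sc \<delta> k \<inter> A)) \<ge> 0"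
  by (intro sum_nonneg mult_nonneg_nonneg cc_nonneg) simp

lemma pointwise:
  fixes E :: "'a set" and s r :: real and x :: 'a
  assumes Eo: "open E" and x: "x \<in> E" and r: "r > 0" and s: "0 \<le> s" "s \<le> real DIM('a)"
  shows "ennreal (ZZ / (4^DIM('a) * (1 + real DIM('a)) powr s)) *
          (INF x\<in>E. INF r\<in>{0<..}. ennreal (r powr s) / emeasure \<mu> (ball x r))
         \<le> ennreal (r powr s) / emeasure eta (E \<inter> ball x r)"
proof -
  define c where "c = ZZ / (4^DIM('a) * (1 + real DIM('a)) powr s)"
  define V where "V = (INF x\<in>E. INF r\<in>{0<..}. ennreal (r powr s) / emeasure \<mu> (ball x r))"
  define e where "e = (\<Sum>k\<in>I0. cc k * measure lborel (Sc \<delta> k \<inter> ball x r))"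
  define \<rho> where "\<rho> = r + real DIM('a) * \<delta>"
  define p where "p = measure \<mu> (ball x \<rho>)"
  define e' where "e' = measure eta (E \<inter> ball x r)"
  have c0: "c > 0" unfolding c_def using ZZ_pos by simp
  have e0: "e \<ge> 0" unfolding e_def by (rule e_nonneg)
  have p0: "p \<ge> 0" unfolding p_def by simp
  have rho0: "\<rho> > 0" unfolding \<rho>_def using r d0 by (simp add: add_pos_nonneg)
  have fmu: "finite_measure \<mu>" using prob_space.axioms(1)[OF mu(2)] .
  have feta: "finite_measure eta" using prob_space.axioms(1)[OF eta_prob] .
  have emu: "emeasure \<mu> (ball x \<rho>) = ennreal p"
    unfolding p_def by (rule finite_measure.emeasure_eq_measure[OF fmu])
  have eeta: "emeasure eta (E \<inter> ball x r) = ennreal e'"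
    unfolding e'_def by (rule finite_measure.emeasure_eq_measure[OF feta])
  have "emeasure eta (E \<inter> ball x r) \<le> emeasure eta (ball x r)"
    by (rule emeasure_mono) (use Eo in auto)
  also have "\<dots> = ennreal e" unfolding e_def by (rule eta_emeasure) simp
  finally have "ennreal e' \<le> ennreal e" using eeta by simp
  then have e'e: "e' \<le> e" using e0 by (simp add: ennreal_le_iff)
  have e'0: "e' \<ge> 0" unfolding e'_def by simp
  have ea: "e \<le> p / ZZ" unfolding e_def p_def \<rho>_def by (rule eta_est(1)[OF r])
  have eb: "e \<le> p / (ZZ * (\<delta>/2)^DIM('a)) * (2*r)^DIM('a)"
    unfolding e_def p_def \<rho>_def using eta_est(2)[OF r] by (simp add: vv_def)
  have rs: "r powr s > 0" using r by simp
  show ?thesis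
  proof (cases "e' = 0")
    case True
    then have "ennreal (r powr s) / emeasure eta (E \<inter> ball x r) = top"
      using eeta rs by simp
    then show ?thesis by simp
  next
    case False
    then have e'p: "e' > 0" using e'0 by simp
    then have ep: "e > 0" using e'e by simp
    have pp: "p > 0"
    proof (rule ccontr)
      assume "\<not> p > 0"
      then have "p = 0" using p0 by simp
      then show False using ea ep by simp
    qed
    have "V \<le> ennreal (\<rho> powr s) / emeasure \<mu> (ball x \<rho>)"
      unfolding V_def by (rule INF_lower2[OF x], rule INF_lower) (use rho0 in simp)
    also have "\<dots> = ennreal (\<rho> powr s / p)" unfolding emu using pp by (simp add: divide_ennreal)
    finally have V: "V \<le> ennreal (\<rho> powr s / p)" .
    have key: "c * \<rho> powr s * e \<le> r powr s * p" unfolding c_def \<rho>_def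
      by (rule real_key[OF s d0 r ZZ_pos p0 e0 ea eb])
    have "c * (\<rho> powr s / p) \<le> r powr s / e'"
    proof -
      have "c * \<rho> powr s * e' \<le> c * \<rho> powr s * e"
        using e'e c0 by (intro mult_left_mono) auto
      also have "\<dots> \<le> r powr s * p" by (rule key)
      finally have "c * \<rho> powr s * e' \<le> r powr s * p" .
      then show ?thesis using pp e'p by (simp add: field_simps)
    qed
    have "ennreal c * V \<le> ennreal c * ennreal (\<rho> powr s / p)" by (rule mult_left_mono[OF V]) simp
    also have "\<dots> = ennreal (c * (\<rho> powr s / p))" by (rule ennreal_mult''[symmetric]) (use pp in simp)
    also have "\<dots> \<le> ennreal (r powr s / e')" by (rule ennreal_leI) fact
    also have "\<dots> = ennreal (r powr s) / emeasure eta (E \<inter> ball x r)"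
      unfolding eeta using e'p rs by (simp add: divide_ennreal)
    finally show ?thesis unfolding c_def V_def .
  qed
qed


lemma ctx_main:
  fixes E :: "'a set" and s :: real
  assumes Eo: "open E" and KE: "\<forall>k\<in>I. Kc \<delta> k \<subseteq> E" and s: "0 \<le> s" "s \<le> real DIM('a)"
  shows "\<exists>(f::'a \<Rightarrow> real) \<eta> C. f \<in> borel_measurable lborel \<and> (\<forall>x. 0 \<le> f x) \<and> bounded (range f) \<and>
       \<eta> = density lborel (\<lambda>x. ennreal (f x)) \<and> prob_space \<eta> \<and>
       finite C \<and> (\<forall>Q\<in>C. is_cube Q \<and> Q \<subseteq> E) \<and> pairwise disjnt C \<and>
       msupport \<eta> = \<Union>C \<and>
       (INF x\<in>E. INF r\<in>{0<..}. ennreal (r powr s) / emeasure \<mu> (ball x r))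
         \<le> ennreal (2 * 4^DIM('a) * (1 + real DIM('a)) powr s) *
         (INF x\<in>E. INF r\<in>{0<..}. ennreal (r powr s) / emeasure \<eta> (E \<inter> ball x r))"
proof (intro exI[of _ ff] exI[of _ eta] exI[of _ "Sc \<delta> ` I0"] conjI)
  show "ff \<in> borel_measurable lborel" by (rule ff_meas)
  show "\<forall>x. 0 \<le> ff x" using ff_nonneg by blast
  show "bounded (range ff)" by (rule ff_bounded)
  show "eta = eta" ..
  show "prob_space eta" by (rule eta_prob)
  show "finite (Sc \<delta> ` I0)" using finI0 by simp
  show "\<forall>Q\<in>Sc \<delta> ` I0. is_cube Q \<and> Q \<subseteq> E"
    using Sc_is_cube[OF d0] Sc_sub_Kc[OF d0] KE I0_sub by blast
  show "pairwise disjnt (Sc \<delta> ` I0)"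
    unfolding pairwise_def disjnt_def using Sc_disj[OF _ _ _ d0] IPi I0_sub by blast
  show "msupport eta = \<Union>(Sc \<delta> ` I0)" by (rule eta_support)
  define c where "c = ZZ / (4^DIM('a) * (1 + real DIM('a)) powr s)"
  define k0 where "k0 = 2 * 4^DIM('a) * (1 + real DIM('a)) powr s"
  define V where "V = (INF x\<in>E. INF r\<in>{0<..}. ennreal (r powr s) / emeasure \<mu> (ball x r))"
  define W where "W = (INF x\<in>E. INF r\<in>{0<..}. ennreal (r powr s) / emeasure eta (E \<inter> ball x r))"
  have cV: "ennreal c * V \<le> W" unfolding W_def
  proof (intro INF_greatest)
    fix x and r :: real assume "x \<in> E" "r \<in> {0<..}"
    then show "ennreal c * V \<le> ennreal (r powr s) / emeasure eta (E \<inter> ball x r)"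
      unfolding c_def V_def using pointwise[OF Eo _ _ s] by simp
  qed
  have kc: "k0 * c = 2 * ZZ" unfolding k0_def c_def by simp
  have k0c: "1 \<le> k0 * c" unfolding kc using ZZ_big by simp
  have "V = ennreal 1 * V" by simp
  also have "\<dots> \<le> ennreal (k0 * c) * V" by (rule mult_right_mono) (use k0c in \<open>auto intro: ennreal_leI\<close>)
  also have "\<dots> = ennreal k0 * (ennreal c * V)"
  proof -
    have k0p: "k0 \<ge> 0" unfolding k0_def by simp
    have cp: "c \<ge> 0" unfolding c_def using ZZ_pos by simp
    show ?thesis by (simp only: ennreal_mult[OF k0p cp] mult.assoc)
  qed
  also have "\<dots> \<le> ennreal k0 * W" by (rule mult_left_mono[OF cV]) simp
  finally show "V \<le> ennreal k0 * W" .
qed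

end



lemma construct:
  fixes E :: "'a::euclidean_space set" and s :: real
  assumes E: "open E" "bounded E" and mu: "sets \<mu> = sets borel" "prob_space \<mu>" "emeasure \<mu> (UNIV - E) = 0"
    and s: "0 \<le> s" "s \<le> real DIM('a)"
  shows "\<exists>(f::'a \<Rightarrow> real) \<eta> C. f \<in> borel_measurable lborel \<and> (\<forall>x. 0 \<le> f x) \<and> bounded (range f) \<and>
       \<eta> = density lborel (\<lambda>x. ennreal (f x)) \<and> prob_space \<eta> \<and>
       finite C \<and> (\<forall>Q\<in>C. is_cube Q \<and> Q \<subseteq> E) \<and> pairwise disjnt C \<and>
       msupport \<eta> = \<Union>C \<and>
       (INF x\<in>E. INF r\<in>{0<..}. ennreal (r powr s) / emeasure \<mu> (ball x r))
         \<le> ennreal (2 * 4^DIM('a) * (1 + real DIM('a)) powr s) *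
         (INF x\<in>E. INF r\<in>{0<..}. ennreal (r powr s) / emeasure \<eta> (E \<inter> ball x r))"
proof -
  obtain \<delta> I where dI: "\<delta> > 0" "finite I" "I \<subseteq> Basis \<rightarrow>\<^sub>E UNIV" "\<forall>k\<in>I. Kc \<delta> k \<subseteq> E"
    "emeasure \<mu> (\<Union>k\<in>I. Hc \<delta> k) > ennreal (1/2)"
    using exhaust[OF mu E] by blast
  show ?thesis by (rule ctx_main[OF mu(1,2) dI(1,2,3,5) E(1) dI(4) s])
qed




lemma V_bound:
  fixes E :: "'a::euclidean_space set"
  assumes mu: "sets \<mu> = sets borel" "prob_space \<mu>" "emeasure \<mu> (UNIV - E) = 0"
    and E: "open E" and x0: "x0 \<in> E" and R: "R > 0" "E \<subseteq> ball x0 R"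
  shows "(INF x\<in>E. INF r\<in>{0<..}. ennreal (r powr s) / emeasure \<mu> (ball x r)) \<le> ennreal (R powr s)"
proof -
  have "emeasure \<mu> E \<le> emeasure \<mu> (ball x0 R)"
    by (rule emeasure_mono[OF R(2)]) (use mu(1) in simp)
  then have "1 \<le> emeasure \<mu> (ball x0 R)" using E_full[OF mu E] by simp
  moreover have "emeasure \<mu> (ball x0 R) \<le> 1" using prob_space.emeasure_le_1[OF mu(2)] .
  ultimately have b1: "emeasure \<mu> (ball x0 R) = 1" by simp
  have "(INF x\<in>E. INF r\<in>{0<..}. ennreal (r powr s) / emeasure \<mu> (ball x r)) \<le> ennreal (R powr s) / emeasure \<mu> (ball x0 R)"
    by (rule INF_lower2[OF x0], rule INF_lower) (use R in simp)
  then show ?thesis using b1 by (simp add: divide_ennreal_def)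
qed

theorem lemma2p3:
  fixes s :: real
  assumes "0 \<le> s" and "s \<le> real DIM('a::euclidean_space)"
  shows "\<exists>\<kappa>1 > 0. \<forall>E :: 'a set. open E \<and> bounded E \<and> E \<noteq> {} \<longrightarrow>
    (\<exists>(f :: 'a \<Rightarrow> real) \<eta> C.
       f \<in> borel_measurable lborel \<and> (\<forall>x. 0 \<le> f x) \<and> bounded (range f) \<and>
       \<eta> = density lborel (\<lambda>x. ennreal (f x)) \<and> prob_space \<eta> \<and>
       finite C \<and> (\<forall>Q\<in>C. is_cube Q \<and> Q \<subseteq> E) \<and> pairwise disjnt C \<and>
       msupport \<eta> = \<Union>C \<and>
       gsvf s E \<le> ennreal \<kappa>1 *
         (INF x\<in>E. INF r\<in>{0<..}. ennreal (r powr s) / emeasure \<eta> (E \<inter> ball x r)))"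
proof (intro exI[of _ "2 * (2 * 4^DIM('a) * (1 + real DIM('a)) powr s)"] conjI allI impI)
  show "0 < 2 * (2 * 4^DIM('a) * (1 + real DIM('a)) powr s)" by simp
  fix E :: "'a set"
  assume EE: "open E \<and> bounded E \<and> E \<noteq> {}"
  then have Eo: "open E" and Eb: "bounded E" and Ene: "E \<noteq> {}" by auto
  define k0 where "k0 = 2 * 4^DIM('a) * (1 + real DIM('a)) powr s"
  have k0p: "k0 \<ge> 0" unfolding k0_def by simp
  define V where "V \<mu> = (INF x\<in>E. INF r\<in>{0<..}. ennreal (r powr s) / emeasure \<mu> (ball x r))" for \<mu> :: "'a measure"
  define W where "W \<eta> = (INF x\<in>E. INF r\<in>{0<..}. ennreal (r powr s) / emeasure \<eta> (E \<inter> ball x r))" for \<eta> :: "'a measure"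
  define Adm where "Adm = {\<mu> :: 'a measure. sets \<mu> = sets borel \<and> prob_space \<mu> \<and> emeasure \<mu> (UNIV - E) = 0}"
  define P where "P f \<eta> C \<longleftrightarrow> f \<in> borel_measurable lborel \<and> (\<forall>x. 0 \<le> f x) \<and> bounded (range f) \<and>
       \<eta> = density lborel (\<lambda>x. ennreal (f x)) \<and> prob_space \<eta> \<and>
       finite C \<and> (\<forall>Q\<in>C. is_cube Q \<and> Q \<subseteq> E) \<and> pairwise disjnt C \<and>
       msupport \<eta> = \<Union>C" for f :: "'a \<Rightarrow> real" and \<eta> C
  have gs: "gsvf s E = (SUP \<mu>\<in>Adm. V \<mu>)" unfolding gsvf_def Adm_def V_def ..
  have cons: "\<exists>f \<eta> C. P f \<eta> C \<and> V \<mu> \<le> ennreal k0 * W \<eta>" if "\<mu> \<in> Adm" for \<mu>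
    using construct[OF Eo Eb _ _ _ assms, of \<mu>] that unfolding Adm_def P_def V_def W_def k0_def by blast
  obtain x0 where x0: "x0 \<in> E" using Ene by blast
  obtain R where R: "R > 0" "E \<subseteq> ball x0 R" using bounded_subset_ballD[OF Eb] by blast
  have gb: "gsvf s E \<le> ennreal (R powr s)" unfolding gs
    by (rule SUP_least) (use V_bound[OF _ _ _ Eo x0 R] in \<open>auto simp: Adm_def V_def\<close>)
  have adm0: "return borel x0 \<in> Adm"
  proof -
    have "UNIV - E \<in> sets borel" using Eo by auto
    then show ?thesis unfolding Adm_def using x0 by (auto intro: prob_space_return)
  qed
  have "\<exists>f \<eta> C. P f \<eta> C \<and> gsvf s E \<le> ennreal (2 * k0) * W \<eta>"
  proof (cases "gsvf s E = 0")
    case True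
    then show ?thesis using cons[OF adm0] by auto
  next
    case False
    define g where "g = enn2real (gsvf s E)"
    have gfin: "gsvf s E < top" using gb by (simp add: le_less_trans)
    have gg: "gsvf s E = ennreal g" unfolding g_def using gfin by (simp add: ennreal_enn2real_if)
    have g0: "g > 0" using False gg by (cases "g > 0") (auto simp: ennreal_eq_0_iff)
    have "ennreal (g/2) < ennreal g" using g0 by (simp add: ennreal_lessI)
    then have "ennreal (g/2) < (SUP \<mu>\<in>Adm. V \<mu>)" using gg gs by simp
    then obtain \<mu> where \<mu>: "\<mu> \<in> Adm" "ennreal (g/2) < V \<mu>" by (auto simp: less_SUP_iff)
    obtain f \<eta> C where fe: "P f \<eta> C" "V \<mu> \<le> ennreal k0 * W \<eta>" using cons[OF \<mu>(1)] by blast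
    have "ennreal 2 * ennreal (g/2) = ennreal (2 * (g/2))" by (rule ennreal_mult[symmetric]) (use g0 in auto)
    then have "gsvf s E = ennreal 2 * ennreal (g/2)" using gg by simp
    also have "\<dots> \<le> ennreal 2 * V \<mu>" by (rule mult_left_mono) (use \<mu>(2) in auto)
    also have "\<dots> \<le> ennreal 2 * (ennreal k0 * W \<eta>)" by (rule mult_left_mono[OF fe(2)]) simp
    also have "\<dots> = ennreal (2 * k0) * W \<eta>" using k0p by (simp add: ennreal_mult mult.assoc)
    finally show ?thesis using fe(1) by blast
  qed
  then show "\<exists>(f :: 'a \<Rightarrow> real) \<eta> C.
       f \<in> borel_measurable lborel \<and> (\<forall>x. 0 \<le> f x) \<and> bounded (range f) \<and>
       \<eta> = density lborel (\<lambda>x. ennreal (f x)) \<and> prob_space \<eta> \<and>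
       finite C \<and> (\<forall>Q\<in>C. is_cube Q \<and> Q \<subseteq> E) \<and> pairwise disjnt C \<and>
       msupport \<eta> = \<Union>C \<and>
       gsvf s E \<le> ennreal (2 * (2 * 4^DIM('a) * (1 + real DIM('a)) powr s)) *
         (INF x\<in>E. INF r\<in>{0<..}. ennreal (r powr s) / emeasure \<eta> (E \<inter> ball x r))"
    unfolding P_def W_def k0_def by blast
qed


end
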